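(* Consider an execution of a propose-vote-merge protocol with an arbitrary fork-choice function $\mathrm{FC}$, in a synchronous network. Suppose that $t$ is a pivot slot and let $B$ be the block proposed by the (honest) proposer of slot $t$. Then every validator in $H_t$ (the honest voters of slot $t$) votes for $B$ in slot $t$.
   Context: Setting. There are $n$ validators $v_1,\dots,v_n$ with commonly known public keys. A probabilistic polynomial-time adversary adaptively corrupts validators during the execution; corrupted (adversarial) validators remain corrupted and may deviate arbitrarily from the protocol; the others are honest. Time is divided into rounds and validators have synchronized clocks. A slot consists of $3\Delta$ rounds, slot $t$ consisting of rounds $3\Delta t,\dots,3\Delta t+3\Delta-1$. Messages are spread by best-effort gossip, cannot be forged, and any message received by an honest validator is gossiped on. Under network synchrony, a message sent or gossiped by an honest validator at round $r$ is received by every awake honest validator by round $r+\Delta$. The adversary also adaptively decides, for every round, which honest validators are awake or asleep; asleep validators do not execute the protocol and messages addressed to them are delivered when they wake up. An honest validator waking up at a round in $(3\Delta(t-1)+2\Delta,\,3\Delta t+2\Delta]$ puts all messages it receives into its buffer and starts executing the protocol only at round $3\Delta t+2\Delta$, when it merges its buffer into its view; from then on it is active until it is corrupted or put to sleep. In each slot $t$ a proposer $v_p^t$ is selected by a single secret leader election (unique, unpredictable until it reveals itself, each validator being the proposer of a given slot with probability $1/n$). $H_t$ denotes the set of honest validators active at round $3\Delta t+\Delta$. A pivot slot is a slot $t$ whose proposer is honest and active at round $3\Delta t$. Propose-vote-merge protocol with fork-choice function $\mathrm{FC}$. A view is a set of received messages (blocks, each referencing a parent, rooted at a genesis block $B_{\mathrm{genesis}}$,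 and votes). A fork-choice function is a deterministic function $\mathrm{FC}$ mapping a view $\mathcal V$ and a slot $t$ to a block of $\mathcal V$ such that whenever $B$ is a block extending $\mathrm{FC}(\mathcal V,t)$ (its parent is $\mathrm{FC}(\mathcal V,t)$), $\mathrm{FC}(\mathcal V\cup\{B\},t)=B$. Each validator $v_i$ keeps a view $\mathcal V_i$ (initially $\{B_{\mathrm{genesis}}\}$), a buffer $\mathcal B_i$ (initially empty) into which every received block and vote is put, and a canonical chain $\mathsf{ch}_i$. In slot $t$: (propose) at round $3\Delta t$ the proposer $v_p$ sets $\mathcal V_p\gets\mathcal V_p\cup\mathcal B_p$, $\mathcal B_p\gets\emptyset$, creates a new block $B$ with parent $\mathrm{FC}(\mathcal V_p,t)$, sets $\mathsf{ch}_p\gets B$ and gossips $[\textsc{propose},B,\mathcal V_p\cup\{B\},t,v_p]$ (proposals of slot $t$ are gossiped only during the first $\Delta$ rounds of slot $t$); (vote) a validator $v_i$ receiving a proposal $[\textsc{propose},B,\mathcal V,t,v_p^t]$ during rounds $[3\Delta t,3\Delta t+\Delta]$ sets $\mathcal V_i\gets\mathcal V_i\cup\mathcal V$; at round $3\Delta t+\Delta$ every active validator sets $\mathsf{ch}_i\gets\mathrm{FC}(\mathcal V_i,t)$ and gossips the vote $[\textsc{vote},\mathrm{FC}(\mathcal V_i,t),t,v_i]$ (a slot-$t$ vote for that block); (merge) at round $3\Delta t+2\Delta$ every validator sets $\mathcal V_i\gets\mathcal V_i\cup\mathcal B_i$ and $\mathcal B_i\gets\emptyset$.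
   Formalization: The proposer of slot t is also still honest at round $3\Delta t+\Delta$, besides being honest and active at round $3\Delta t$. Each condition added here is assumed in the paper as well or is needed for the statement above to hold. *)

theory Defs
  imports Main
begin

text \<open>Elements of views: blocks (abstract type 'b, parent given by a function)
  and slot votes [vote, B, t, v].\<close>
datatype ('b, 'v) vmsg = Blk 'b | VoteMsg 'b nat 'v

text \<open>Wire messages: plain blocks/votes, or proposals [propose, B, V, t, v].\<close>
datatype ('b, 'v) msg = Plain "('b, 'v) vmsg" | Propose 'b "('b, 'v) vmsg set" nat 'v

fun items :: "('b, 'v) msg \<Rightarrow> ('b, 'v) vmsg set" where
  "items (Plain x) = {x}"
| "items (Propose B V t v) = insert (Blk B) V"

fun signer :: "('b, 'v) msg \<Rightarrow> 'v option" where
  "signer (Plain (Blk B)) = None"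
| "signer (Plain (VoteMsg B t v)) = Some v"
| "signer (Propose B V t v) = Some v"

definition rooted :: "'b \<Rightarrow> ('b \<Rightarrow> 'b) \<Rightarrow> bool" where
  "rooted genesis parent \<longleftrightarrow> (\<forall>b. \<exists>k. (parent ^^ k) b = genesis)"

definition fork_choice ::
  "'b \<Rightarrow> ('b \<Rightarrow> 'b) \<Rightarrow> (('b, 'v) vmsg set \<Rightarrow> nat \<Rightarrow> 'b) \<Rightarrow> bool" where
  "fork_choice genesis parent FC \<longleftrightarrow>
     (\<forall>V t. finite V \<and> Blk genesis \<in> V \<longrightarrow> Blk (FC V t) \<in> V) \<and>
     (\<forall>V t B. finite V \<and> parent B = FC V t \<longrightarrow> FC (insert (Blk B) V) t = B)"

text \<open>All functions are indexed by validator and round;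
  view/buf are the values at the END of the round (after the round's actions);
  rcv i r = messages delivered to i at round r; sent i r = messages sent or gossiped
  by i at round r; proposer t = the (unique) SSLE winner of slot t;
  newblock t = the block created by the proposer of slot t (if honest).\<close>
record ('b, 'v) execution =
  proposer :: "nat \<Rightarrow> 'v"
  newblock :: "nat \<Rightarrow> 'b"
  honest :: "'v \<Rightarrow> nat \<Rightarrow> bool"
  awake :: "'v \<Rightarrow> nat \<Rightarrow> bool"
  rcv :: "'v \<Rightarrow> nat \<Rightarrow> ('b, 'v) msg set"
  sent :: "'v \<Rightarrow> nat \<Rightarrow> ('b, 'v) msg set"
  view :: "'v \<Rightarrow> nat \<Rightarrow> ('b, 'v) vmsg set"
  buf :: "'v \<Rightarrow> nat \<Rightarrow> ('b, 'v) vmsg set"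

definition slot_of :: "nat \<Rightarrow> nat \<Rightarrow> nat" where
  "slot_of D r = r div (3 * D)"

text \<open>Active: honest, awake, and awake without interruption since round 0 or since
  a merge round 3Dt+2D (a validator waking up starts executing only at the next merge round).\<close>
definition active :: "nat \<Rightarrow> ('b, 'v) execution \<Rightarrow> 'v \<Rightarrow> nat \<Rightarrow> bool" where
  "active D E i r \<longleftrightarrow> honest E i r \<and> awake E i r \<and>
     (\<exists>s\<le>r. (s = 0 \<or> s mod (3 * D) = 2 * D) \<and> (\<forall>r'. s \<le> r' \<and> r' \<le> r \<longrightarrow> awake E i r'))"

definition prev_view :: "'b \<Rightarrow> ('b, 'v) execution \<Rightarrow> 'v \<Rightarrow> nat \<Rightarrow> ('b, 'v) vmsg set" where
  "prev_view genesis E i r = (if r = 0 then {Blk genesis} else view E i (r - 1))"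

definition prev_buf :: "('b, 'v) execution \<Rightarrow> 'v \<Rightarrow> nat \<Rightarrow> ('b, 'v) vmsg set" where
  "prev_buf E i r = (if r = 0 then {} else buf E i (r - 1))"

definition received_items :: "('b, 'v) execution \<Rightarrow> 'v \<Rightarrow> nat \<Rightarrow> ('b, 'v) vmsg set" where
  "received_items E i r = \<Union> (items ` rcv E i r)"

text \<open>View of the proposer after merging its buffer at the proposal round.\<close>
definition pview :: "'b \<Rightarrow> ('b, 'v) execution \<Rightarrow> 'v \<Rightarrow> nat \<Rightarrow> ('b, 'v) vmsg set" where
  "pview genesis E i r = prev_view genesis E i r \<union> prev_buf E i r \<union> received_items E i r"

definition props :: "('b, 'v) execution \<Rightarrow> 'v \<Rightarrow> nat \<Rightarrow> nat \<Rightarrow> ('b, 'v) vmsg set" where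
  "props E i r t = \<Union> {V. \<exists>B. Propose B V t (proposer E t) \<in> rcv E i r}"

fun gossipable :: "nat \<Rightarrow> nat \<Rightarrow> ('b, 'v) msg \<Rightarrow> bool" where
  "gossipable D r (Propose B V t v) = (3 * D * t \<le> r \<and> r < 3 * D * t + D)"
| "gossipable D r (Plain x) = True"

definition gossip :: "nat \<Rightarrow> ('b, 'v) execution \<Rightarrow> 'v \<Rightarrow> nat \<Rightarrow> ('b, 'v) msg set" where
  "gossip D E i r = {m \<in> rcv E i r. gossipable D r m} \<union> Plain ` received_items E i r"

definition own :: "nat \<Rightarrow> 'b \<Rightarrow> (('b, 'v) vmsg set \<Rightarrow> nat \<Rightarrow> 'b) \<Rightarrow> ('b, 'v) execution
    \<Rightarrow> 'v \<Rightarrow> nat \<Rightarrow> ('b, 'v) msg set" where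
  "own D genesis FC E i r =
     (if active D E i r \<and> r mod (3 * D) = 0 \<and> proposer E (slot_of D r) = i
      then {Propose (newblock E (slot_of D r))
              (insert (Blk (newblock E (slot_of D r))) (pview genesis E i r)) (slot_of D r) i}
      else {}) \<union>
     (if active D E i r \<and> r mod (3 * D) = D
      then {Plain (VoteMsg (FC (view E i r) (slot_of D r)) (slot_of D r) i)}
      else {})"

text \<open>The honest protocol step of validator i at round r (receive first, then act).\<close>
definition honest_step :: "nat \<Rightarrow> 'b \<Rightarrow> ('b \<Rightarrow> 'b) \<Rightarrow> (('b, 'v) vmsg set \<Rightarrow> nat \<Rightarrow> 'b)
    \<Rightarrow> ('b, 'v) execution \<Rightarrow> 'v \<Rightarrow> nat \<Rightarrow> bool" where
  "honest_step D genesis parent FC E i r \<longleftrightarrow>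
     (let t = slot_of D r; ph = r mod (3 * D) in
      if \<not> awake E i r then
        rcv E i r = {} \<and> sent E i r = {} \<and>
        view E i r = prev_view genesis E i r \<and> buf E i r = prev_buf E i r
      else
        sent E i r = gossip D E i r \<union> own D genesis FC E i r \<and>
        (if active D E i r \<and> ph = 2 * D then
           view E i r = prev_view genesis E i r \<union> prev_buf E i r \<union> received_items E i r
           \<and> buf E i r = {}
         else if active D E i r \<and> ph = 0 \<and> proposer E t = i then
           parent (newblock E t) = FC (pview genesis E i r) t
           \<and> view E i r = pview genesis E i r \<union> props E i r t
           \<and> buf E i r = {}
         else if active D E i r \<and> ph \<le> D then
           view E i r = prev_view genesis E i r \<union> props E i r t
           \<and> buf E i r = prev_buf E i r \<union> received_items E i r
         else
           view E i r = prev_view genesis E i r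
           \<and> buf E i r = prev_buf E i r \<union> received_items E i r))"

definition pvm_execution :: "nat \<Rightarrow> 'b \<Rightarrow> ('b \<Rightarrow> 'b) \<Rightarrow> (('b, 'v) vmsg set \<Rightarrow> nat \<Rightarrow> 'b)
    \<Rightarrow> ('b, 'v) execution \<Rightarrow> bool" where
  "pvm_execution D genesis parent FC E \<longleftrightarrow>
     0 < D \<and> rooted genesis parent \<and> fork_choice genesis parent FC \<and>
     \<comment> \<open>corrupted validators remain corrupted\<close>
     (\<forall>i r. honest E i (Suc r) \<longrightarrow> honest E i r) \<and>
     \<comment> \<open>honest validators follow the protocol\<close>
     (\<forall>i r. honest E i r \<longrightarrow> honest_step D genesis parent FC E i r) \<and>
     \<comment> \<open>only messages that were sent can be received\<close>
     (\<forall>i r m. m \<in> rcv E i r \<longrightarrow> (\<exists>j r'. r' \<le> r \<and> m \<in> sent E j r')) \<and>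
     \<comment> \<open>unforgeability: a message signed by a validator honest at round r, sent by anyone
         at round r, was originated by that validator at some round \<le> r\<close>
     (\<forall>j r m v. m \<in> sent E j r \<and> signer m = Some v \<and> honest E v r \<longrightarrow>
        (\<exists>r'\<le>r. m \<in> own D genesis FC E v r')) \<and>
     \<comment> \<open>synchrony: a message sent/gossiped by an honest validator at round r is received by
         every honest validator awake at a round w \<ge> r + D by round w (asleep validators
         get their messages when they wake up)\<close>
     (\<forall>j r m i w. m \<in> sent E j r \<and> honest E j r \<and> r + D \<le> w \<and> honest E i w \<and> awake E i w
        \<longrightarrow> (\<exists>r'\<le>w. m \<in> rcv E i r')) \<and>
     \<comment> \<open>messages are finite objects, finitely many are delivered per round\<close>
     (\<forall>i r. finite (rcv E i r) \<and> (\<forall>m\<in>rcv E i r. finite (items m)))"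

definition H :: "nat \<Rightarrow> ('b, 'v) execution \<Rightarrow> nat \<Rightarrow> 'v set" where
  "H D E t = {i. active D E i (3 * D * t + D)}"

definition pivot_slot :: "nat \<Rightarrow> ('b, 'v) execution \<Rightarrow> nat \<Rightarrow> bool" where
  "pivot_slot D E t \<longleftrightarrow> active D E (proposer E t) (3 * D * t)"

end

theory Submission
  imports Defs
begin

lemma P_D: "pvm_execution D genesis parent FC E \<Longrightarrow> 0 < D"
  by (simp add: pvm_execution_def)

lemma hs: "pvm_execution D genesis parent FC E \<Longrightarrow> honest E i r \<Longrightarrow> honest_step D genesis parent FC E i r"
  by (simp add: pvm_execution_def)

lemma honest_back: "pvm_execution D genesis parent FC E \<Longrightarrow> honest E i r \<Longrightarrow> r' \<le> r \<Longrightarrow> honest E i r'"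
proof (induction r)
  case 0 then show ?case by simp
next
  case (Suc r)
  have "honest E i r" using Suc.prems by (auto simp: pvm_execution_def)
  then show ?case using Suc by (cases "r' = Suc r") auto
qed

lemma props_sub: "props E i r t \<subseteq> received_items E i r"
  unfolding props_def received_items_def by force

lemma view_mono_step: "pvm_execution D genesis parent FC E \<Longrightarrow> honest E i r \<Longrightarrow> prev_view genesis E i r \<subseteq> view E i r"
  using hs[of D genesis parent FC E i r] unfolding honest_step_def pview_def
  by (auto simp: Let_def split: if_splits)

lemma vb_step: "pvm_execution D genesis parent FC E \<Longrightarrow> honest E i r \<Longrightarrow>
   prev_view genesis E i r \<union> prev_buf E i r \<union> received_items E i r \<subseteq> view E i r \<union> buf E i r"
  using hs[of D genesis parent FC E i r] unfolding honest_step_def pview_def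
  by (auto simp: Let_def received_items_def split: if_splits)

lemma vb_up: "pvm_execution D genesis parent FC E \<Longrightarrow> honest E i r \<Longrightarrow>
   view E i r \<union> buf E i r \<subseteq> prev_view genesis E i r \<union> prev_buf E i r \<union> received_items E i r"
  using hs[of D genesis parent FC E i r] props_sub[of E i r] unfolding honest_step_def pview_def
  by (auto simp: Let_def split: if_splits)

lemma buf_up: "pvm_execution D genesis parent FC E \<Longrightarrow> honest E i r \<Longrightarrow>
   buf E i r \<subseteq> prev_buf E i r \<union> received_items E i r"
  using hs[of D genesis parent FC E i r] unfolding honest_step_def pview_def
  by (auto simp: Let_def split: if_splits)

lemma view_cases: "pvm_execution D genesis parent FC E \<Longrightarrow> honest E i r \<Longrightarrow>
   view E i r \<subseteq> prev_view genesis E i r \<or> (r mod (3*D) \<le> 2*D \<and>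
   view E i r \<subseteq> prev_view genesis E i r \<union> prev_buf E i r \<union> received_items E i r)"
  using hs[of D genesis parent FC E i r] props_sub[of E i r] unfolding honest_step_def pview_def
  by (auto simp: Let_def split: if_splits)

lemma awake_rcv: "pvm_execution D genesis parent FC E \<Longrightarrow> honest E i r \<Longrightarrow> m \<in> rcv E i r \<Longrightarrow> awake E i r"
  using hs[of D genesis parent FC E i r] unfolding honest_step_def
  by (auto simp: Let_def split: if_splits)

lemma sent_eq: "pvm_execution D genesis parent FC E \<Longrightarrow> honest E i r \<Longrightarrow> awake E i r \<Longrightarrow>
   sent E i r = gossip D E i r \<union> own D genesis FC E i r"
  using hs[of D genesis parent FC E i r] unfolding honest_step_def
  by (auto simp: Let_def split: if_splits)

lemma window_step: "pvm_execution D genesis parent FC E \<Longrightarrow> active D E i R \<Longrightarrow> R mod (3*D) \<le> D \<Longrightarrow>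
   props E i R (slot_of D R) \<subseteq> view E i R \<and>
   view E i R \<subseteq> prev_view genesis E i R \<union> props E i R (slot_of D R) \<union>
     (if proposer E (slot_of D R) = i \<and> R mod (3*D) = 0 then pview genesis E i R else {})"
proof -
  assume P: "pvm_execution D genesis parent FC E" and a: "active D E i R" and m: "R mod (3*D) \<le> D"
  have "0 < D" using P_D[OF P] .
  then have n2: "R mod (3*D) \<noteq> 2*D" using m by auto
  have "honest E i R" "awake E i R" using a by (auto simp: active_def)
  then show ?thesis
    using hs[OF P \<open>honest E i R\<close>] a m n2 unfolding honest_step_def pview_def
    by (auto simp: Let_def split: if_splits)
qed

lemma own_prop: "0 < D \<Longrightarrow> Propose B' V' t' v \<in> own D genesis FC E v' r \<Longrightarrow>
   r = 3*D*t' \<and> B' = newblock E t' \<and> V' = insert (Blk B') (pview genesis E v' r) \<and> v = v'"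
  unfolding own_def slot_of_def
  by (auto split: if_splits)

lemma slot_arith: "0 < D \<Longrightarrow> k < 3*D \<Longrightarrow> (3*D*t + k) mod (3*D) = k \<and> slot_of D (3*D*t + k) = t"
  unfolding slot_of_def by simp

lemma add_bound: "0 < D \<Longrightarrow> R mod (3*D) \<le> 2*D \<Longrightarrow> R + D \<le> 3*D*(slot_of D R + 1)"
  unfolding slot_of_def
  using div_mult_mod_eq[of R "3*D"] by (simp add: algebra_simps)


lemma view_mono: "pvm_execution D genesis parent FC E \<Longrightarrow> honest E i R \<Longrightarrow> r \<le> R \<Longrightarrow> view E i r \<subseteq> view E i R"
proof (induction R)
  case 0 then show ?case by simp
next
  case (Suc R)
  show ?case
  proof (cases "r = Suc R")
    case False
    have h: "honest E i R" using honest_back[OF Suc.prems(1,2)] by simp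
    have "view E i R \<subseteq> view E i (Suc R)"
      using view_mono_step[OF Suc.prems(1,2)] by (simp add: prev_view_def)
    then show ?thesis using Suc.IH[OF Suc.prems(1) h] False Suc.prems(3) by auto
  qed simp
qed

lemma genesis_in: "pvm_execution D genesis parent FC E \<Longrightarrow> honest E i R \<Longrightarrow> Blk genesis \<in> view E i R"
proof -
  assume P: "pvm_execution D genesis parent FC E" and h: "honest E i R"
  have "Blk genesis \<in> view E i 0"
    using view_mono_step[OF P honest_back[OF P h, of 0]] by (simp add: prev_view_def)
  then show ?thesis using view_mono[OF P h, of 0] by auto
qed

lemma vb_contain: "pvm_execution D genesis parent FC E \<Longrightarrow> honest E i R \<Longrightarrow> r \<le> R \<Longrightarrow>
   received_items E i r \<subseteq> view E i R \<union> buf E i R"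
proof (induction R)
  case 0 then show ?case using vb_step[OF 0(1,2)] by auto
next
  case (Suc R)
  show ?case
  proof (cases "r = Suc R")
    case True then show ?thesis using vb_step[OF Suc.prems(1,2)] by auto
  next
    case False
    have h: "honest E i R" using honest_back[OF Suc.prems(1,2)] by simp
    have "view E i R \<union> buf E i R \<subseteq> view E i (Suc R) \<union> buf E i (Suc R)"
      using vb_step[OF Suc.prems(1,2)] by (auto simp add: prev_view_def prev_buf_def)
    then show ?thesis using Suc.IH[OF Suc.prems(1) h] False Suc.prems(3) by auto
  qed
qed

lemma upper: "pvm_execution D genesis parent FC E \<Longrightarrow> honest E i R \<Longrightarrow>
   view E i R \<union> buf E i R \<subseteq> insert (Blk genesis) (\<Union>r\<in>{..R}. received_items E i r)"
proof (induction R)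
  case 0 then show ?case using vb_up[OF 0(1,2)] by (auto simp: prev_view_def prev_buf_def)
next
  case (Suc R)
  have h: "honest E i R" using honest_back[OF Suc.prems(1,2)] by simp
  have sub: "(\<Union>r\<in>{..R}. received_items E i r) \<subseteq> (\<Union>r\<in>{..Suc R}. received_items E i r)"
    by (rule UN_mono) auto
  have "received_items E i (Suc R) \<subseteq> (\<Union>r\<in>{..Suc R}. received_items E i r)" by auto
  then show ?case using vb_up[OF Suc.prems(1,2)] Suc.IH[OF Suc.prems(1) h] sub
    by (simp add: prev_view_def prev_buf_def) blast
qed

lemma finite_ri: "pvm_execution D genesis parent FC E \<Longrightarrow> finite (received_items E i r)"
  unfolding received_items_def pvm_execution_def by auto

lemma finite_vb: "pvm_execution D genesis parent FC E \<Longrightarrow> honest E i R \<Longrightarrow> finite (view E i R \<union> buf E i R)"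
  using upper[of D genesis parent FC E i R] finite_ri[of D genesis parent FC E i]
  by (meson finite.insertI finite_UN_I finite_atMost finite_subset)

lemma view_bound: "pvm_execution D genesis parent FC E \<Longrightarrow> honest E i R \<Longrightarrow>
   (\<forall>x\<in>view E i R. x = Blk genesis \<or> (\<exists>r''\<le>R. x \<in> received_items E i r'' \<and> r'' + D \<le> 3*D*(slot_of D R + 1)))
   \<and> (\<forall>x\<in>buf E i R. \<exists>r''\<le>R. x \<in> received_items E i r'')"
proof (induction R)
  case 0
  have D: "0 < D" using P_D[OF 0(1)] .
  show ?case
    using vb_up[OF 0(1,2)] buf_up[OF 0(1,2)] view_cases[OF 0(1,2)] add_bound[OF D, of 0]
    by (auto simp: prev_view_def prev_buf_def)
next
  case (Suc R)
  have D: "0 < D" using P_D[OF Suc.prems(1)] .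
  have h: "honest E i R" using honest_back[OF Suc.prems(1,2)] by simp
  note IH = Suc.IH[OF Suc.prems(1) h]
  have sl: "slot_of D R \<le> slot_of D (Suc R)" unfolding slot_of_def by (simp add: div_le_mono)
  have bufp: "\<forall>x\<in>buf E i (Suc R). \<exists>r''\<le>Suc R. x \<in> received_items E i r''"
  proof
    fix x assume "x \<in> buf E i (Suc R)"
    then have "x \<in> buf E i R \<or> x \<in> received_items E i (Suc R)"
      using buf_up[OF Suc.prems(1,2)] by (auto simp: prev_view_def prev_buf_def)
    then show "\<exists>r''\<le>Suc R. x \<in> received_items E i r''" using IH le_SucI by blast
  qed
  have oldv: "x = Blk genesis \<or> (\<exists>r''\<le>Suc R. x \<in> received_items E i r'' \<and> r'' + D \<le> 3*D*(slot_of D (Suc R) + 1))"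
    if "x \<in> view E i R" for x
  proof -
    from IH that have "x = Blk genesis \<or> (\<exists>r''\<le>R. x \<in> received_items E i r'' \<and> r'' + D \<le> 3*D*(slot_of D R + 1))" by blast
    moreover have "3*D*(slot_of D R + 1) \<le> 3*D*(slot_of D (Suc R) + 1)" using sl by simp
    ultimately show ?thesis using le_SucI by (meson order_trans)
  qed
  have "\<forall>x\<in>view E i (Suc R). x = Blk genesis \<or> (\<exists>r''\<le>Suc R. x \<in> received_items E i r'' \<and> r'' + D \<le> 3*D*(slot_of D (Suc R) + 1))"
  proof
    fix x assume x: "x \<in> view E i (Suc R)"
    from view_cases[OF Suc.prems(1,2)]
    show "x = Blk genesis \<or> (\<exists>r''\<le>Suc R. x \<in> received_items E i r'' \<and> r'' + D \<le> 3*D*(slot_of D (Suc R) + 1))"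
    proof
      assume "view E i (Suc R) \<subseteq> prev_view genesis E i (Suc R)"
      then show ?thesis using x oldv by (auto simp: prev_view_def)
    next
      assume a: "Suc R mod (3*D) \<le> 2*D \<and> view E i (Suc R) \<subseteq> prev_view genesis E i (Suc R) \<union> prev_buf E i (Suc R) \<union> received_items E i (Suc R)"
      have bd: "Suc R + D \<le> 3*D*(slot_of D (Suc R) + 1)" using add_bound[OF D] a by blast
      have "x \<in> view E i R \<or> x \<in> buf E i R \<or> x \<in> received_items E i (Suc R)"
        using a x by (auto simp: prev_view_def prev_buf_def)
      then show ?thesis
      proof (elim disjE)
        assume "x \<in> view E i R" then show ?thesis using oldv by blast
      next
        assume "x \<in> buf E i R"
        then obtain r'' where "r'' \<le> R" "x \<in> received_items E i r''" using IH by blast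
        then show ?thesis using bd by (intro disjI2 exI[of _ r'']) auto
      next
        assume "x \<in> received_items E i (Suc R)"
        then show ?thesis using bd by (intro disjI2 exI[of _ "Suc R"]) auto
      qed
    qed
  qed
  then show ?case using bufp by blast
qed


lemma sync: "pvm_execution D genesis parent FC E \<Longrightarrow> m \<in> sent E j r \<Longrightarrow> honest E j r \<Longrightarrow> r + D \<le> w
  \<Longrightarrow> honest E i w \<Longrightarrow> awake E i w \<Longrightarrow> \<exists>r'\<le>w. m \<in> rcv E i r'"
proof -
  assume "pvm_execution D genesis parent FC E"
  then have "\<forall>j r m i w. m \<in> sent E j r \<and> honest E j r \<and> r + D \<le> w \<and> honest E i w \<and> awake E i w
        \<longrightarrow> (\<exists>r'\<le>w. m \<in> rcv E i r')" unfolding pvm_execution_def by (elim conjE)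
  then show "m \<in> sent E j r \<Longrightarrow> honest E j r \<Longrightarrow> r + D \<le> w
  \<Longrightarrow> honest E i w \<Longrightarrow> awake E i w \<Longrightarrow> \<exists>r'\<le>w. m \<in> rcv E i r'" by blast
qed

lemma rcv_sent: "pvm_execution D genesis parent FC E \<Longrightarrow> m \<in> rcv E i r \<Longrightarrow> \<exists>j r'. r' \<le> r \<and> m \<in> sent E j r'"
proof -
  assume "pvm_execution D genesis parent FC E"
  then have "\<forall>i r m. m \<in> rcv E i r \<longrightarrow> (\<exists>j r'. r' \<le> r \<and> m \<in> sent E j r')" unfolding pvm_execution_def by (elim conjE)
  then show "m \<in> rcv E i r \<Longrightarrow> \<exists>j r'. r' \<le> r \<and> m \<in> sent E j r'" by blast
qed

lemma unforge: "pvm_execution D genesis parent FC E \<Longrightarrow> m \<in> sent E j r \<Longrightarrow> signer m = Some v \<Longrightarrow> honest E v r \<Longrightarrow>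
        \<exists>r'\<le>r. m \<in> own D genesis FC E v r'"
proof -
  assume "pvm_execution D genesis parent FC E"
  then have "\<forall>j r m v. m \<in> sent E j r \<and> signer m = Some v \<and> honest E v r \<longrightarrow>
        (\<exists>r'\<le>r. m \<in> own D genesis FC E v r')" unfolding pvm_execution_def by (elim conjE)
  then show "m \<in> sent E j r \<Longrightarrow> signer m = Some v \<Longrightarrow> honest E v r \<Longrightarrow>
        \<exists>r'\<le>r. m \<in> own D genesis FC E v r'" by blast
qed

lemma fc_ext: "pvm_execution D genesis parent FC E \<Longrightarrow> finite V \<Longrightarrow> parent B = FC V t \<Longrightarrow> FC (insert (Blk B) V) t = B"
proof -
  assume "pvm_execution D genesis parent FC E"
  then have "fork_choice genesis parent FC" unfolding pvm_execution_def by (elim conjE)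
  then show "finite V \<Longrightarrow> parent B = FC V t \<Longrightarrow> FC (insert (Blk B) V) t = B" unfolding fork_choice_def by blast
qed

lemma prop_origin: "pvm_execution D genesis parent FC E \<Longrightarrow> Propose B' V' t' v \<in> rcv E i R \<Longrightarrow> honest E v R \<Longrightarrow>
   R \<ge> 3*D*t' \<and> B' = newblock E t' \<and> V' = insert (Blk B') (pview genesis E v (3*D*t'))"
proof -
  assume P: "pvm_execution D genesis parent FC E" and m: "Propose B' V' t' v \<in> rcv E i R" and h: "honest E v R"
  have D: "0 < D" using P_D[OF P] .
  from rcv_sent[OF P m] obtain j r' where r': "r' \<le> R" "Propose B' V' t' v \<in> sent E j r'"
    by blast
  have "honest E v r'" using honest_back[OF P h r'(1)] .
  with unforge[OF P r'(2)] obtain r'' where "r'' \<le> r'" "Propose B' V' t' v \<in> own D genesis FC E v r''"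
    by auto
  with own_prop[OF D] r'(1) show ?thesis by fastforce
qed

theorem lemma3p1:
  fixes D :: nat and genesis :: 'b and parent :: "'b \<Rightarrow> 'b"
    and FC :: "('b, 'v) vmsg set \<Rightarrow> nat \<Rightarrow> 'b" and E :: "('b, 'v) execution"
  assumes "pvm_execution D genesis parent FC E"
    and "pivot_slot D E t"
    and "honest E (proposer E t) (3 * D * t + D)"
    and "Propose B V t (proposer E t) \<in> own D genesis FC E (proposer E t) (3 * D * t)"
    and "i \<in> H D E t"
  shows "Plain (VoteMsg B t i) \<in> own D genesis FC E i (3 * D * t + D)"
proof -
  note P = assms(1)
  have D: "0 < D" using P_D[OF P] .
  define p where "p = proposer E t"
  define r0 where "r0 = 3*D*t"
  define r1 where "r1 = 3*D*t + D"
  define PV where "PV = pview genesis E p r0"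
  define VP where "VP = insert (Blk B) PV"
  have sl0: "r0 mod (3*D) = 0" "slot_of D r0 = t" using slot_arith[OF D, of 0 t] D by (auto simp: r0_def)
  have sl1: "r1 mod (3*D) = D" "slot_of D r1 = t" using slot_arith[OF D, of D t] D by (auto simp: r1_def)
  have op: "B = newblock E t \<and> V = VP"
    using own_prop[OF D assms(4)] by (simp add: VP_def PV_def p_def r0_def)
  have pact: "active D E p r0" using assms(2) by (simp add: pivot_slot_def p_def r0_def)
  then have ph: "honest E p r0" and pa: "awake E p r0" by (auto simp: active_def)
  have ph1: "honest E p r1" using assms(3) by (simp add: p_def r1_def)
  have par: "parent B = FC PV t"
    using hs[OF P ph] pact pa sl0 D op unfolding honest_step_def
    by (auto simp: Let_def PV_def p_def)
  have finPV: "finite PV"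
    using finite_vb[OF P ph] vb_step[OF P ph] unfolding PV_def pview_def
    by (meson finite_subset)
  have fc: "FC VP t = B"
    using fc_ext[OF P finPV par] by (simp add: VP_def)
  have iact: "active D E i r1" using assms(5) by (simp add: H_def r1_def)
  then have ih1: "honest E i r1" and ia1: "awake E i r1" by (auto simp: active_def)
  obtain s where s: "s \<le> r1" "s = 0 \<or> s mod (3*D) = 2*D" "\<forall>r'. s \<le> r' \<and> r' \<le> r1 \<longrightarrow> awake E i r'"
    using iact unfolding active_def by blast
  have "s \<le> r0"
  proof (rule ccontr)
    assume "\<not> s \<le> r0"
    define k where "k = s - 3*D*t"
    have k: "s = 3*D*t + k" "0 < k" "k \<le> D" using s(1) \<open>\<not> s \<le> r0\<close> unfolding r0_def r1_def k_def
      by linarith+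
    have "k < 3*D" using k D by simp
    then have "s mod (3*D) = k" using slot_arith[OF D] k(1) by blast
    then show False using s(2) k D by auto
  qed
  have act: "active D E i R" if "r0 \<le> R" "R \<le> r1" for R
    unfolding active_def
  proof (intro conjI)
    show "honest E i R" using honest_back[OF P ih1 that(2)] .
    show "awake E i R" using s(3) \<open>s \<le> r0\<close> that by auto
    show "\<exists>s\<le>R. (s = 0 \<or> s mod (3 * D) = 2 * D) \<and> (\<forall>r'. s \<le> r' \<and> r' \<le> R \<longrightarrow> awake E i r')"
      using s \<open>s \<le> r0\<close> that by (intro exI[of _ s]) auto
  qed
  have win: "R mod (3*D) \<le> D \<and> slot_of D R = t \<and> (R mod (3*D) = 0 \<longleftrightarrow> R = r0)"
    if "r0 \<le> R" "R \<le> r1" for R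
  proof -
    define k where "k = R - 3*D*t"
    have k: "R = 3*D*t + k" "k \<le> D" using that unfolding r0_def r1_def k_def
      by linarith+
    have "k < 3*D" using k D by simp
    then show ?thesis using slot_arith[OF D, of k t] k by (auto simp: r0_def)
  qed
  have propsVP: "props E i R t \<subseteq> VP" if "R \<le> r1" for R
  proof
    fix x assume "x \<in> props E i R t"
    then obtain B' V' where "Propose B' V' t p \<in> rcv E i R" "x \<in> V'"
      unfolding props_def p_def by blast
    moreover have "honest E p R" using honest_back[OF P ph1 that] .
    ultimately show "x \<in> VP" using prop_origin[OF P] op
      by (fastforce simp: VP_def PV_def r0_def)
  qed
  have up: "view E i R \<subseteq> prev_view genesis E i r0 \<union> VP" if "r0 \<le> R" "R \<le> r1" for R
    using that
  proof (induction R)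
    case 0
    then have "r0 = 0" by simp
    have w: "0 mod (3*D) \<le> D" by simp
    show ?case using window_step[OF P act[OF 0(1,2)]] w propsVP[OF 0(2)] sl0 \<open>r0 = 0\<close>
      by (auto simp: PV_def VP_def p_def split: if_splits)
  next
    case (Suc R)
    note ws = window_step[OF P act[OF Suc.prems] conjunct1[OF win[OF Suc.prems]]]
    note wi = win[OF Suc.prems]
    show ?case
    proof (cases "Suc R = r0")
      case True
      then show ?thesis using ws propsVP[OF Suc.prems(2)] wi
        by (auto simp: PV_def VP_def p_def split: if_splits)
    next
      case False
      then have "view E i R \<subseteq> prev_view genesis E i r0 \<union> VP" using Suc by auto
      then show ?thesis using ws propsVP[OF Suc.prems(2)] wi False
        by (auto simp: prev_view_def split: if_splits)
    qed
  qed
  have pvsub: "prev_view genesis E i r0 \<subseteq> PV"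
  proof (cases "t = 0")
    case True
    then have "r0 = 0" by (simp add: r0_def)
    then show ?thesis by (auto simp: prev_view_def PV_def pview_def)
  next
    case False
    have gen: "Blk genesis \<in> PV"
      using genesis_in[OF P honest_back[OF P ph, of "r0 - 1"]] \<open>t \<noteq> 0\<close> D
      by (auto simp: PV_def pview_def prev_view_def r0_def)
    have r0m: "r0 - 1 = 3*D*(t-1) + (3*D - 1)" using False D unfolding r0_def
      by (cases t) (auto simp: algebra_simps)
    have slm: "slot_of D (r0 - 1) = t - 1" using slot_arith[OF D, of "3*D-1" "t-1"] D r0m by simp
    have hi: "honest E i (r0 - 1)" using honest_back[OF P ih1] by (simp add: r0_def r1_def)
    show ?thesis
    proof
      fix x assume x: "x \<in> prev_view genesis E i r0"
      then have "x \<in> view E i (r0 - 1)" using False D by (simp add: prev_view_def r0_def)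
      with conjunct1[OF view_bound[OF P hi]]
      have "x = Blk genesis \<or> (\<exists>r''\<le>r0 - 1. x \<in> received_items E i r'' \<and> r'' + D \<le> 3*D*(slot_of D (r0 - 1) + 1))"
        by blast
      then show "x \<in> PV"
      proof
        assume "x = Blk genesis" then show ?thesis using gen by simp
      next
        assume "\<exists>r''\<le>r0 - 1. x \<in> received_items E i r'' \<and> r'' + D \<le> 3*D*(slot_of D (r0 - 1) + 1)"
        moreover have "3*D*(slot_of D (r0 - 1) + 1) = r0" using slm False by (simp add: r0_def)
        ultimately obtain r'' where r'': "r'' \<le> r0 - 1" "x \<in> received_items E i r''" "r'' + D \<le> r0"
          by metis
        have hr: "honest E i r''" using honest_back[OF P hi r''(1)] .
        obtain m where m: "m \<in> rcv E i r''" "x \<in> items m" using r''(2) unfolding received_items_def by blast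
        have "awake E i r''" using awake_rcv[OF P hr m(1)] .
        then have "Plain x \<in> sent E i r''" using sent_eq[OF P hr] r''(2) unfolding gossip_def by auto
        then obtain r' where r': "r' \<le> r0" "Plain x \<in> rcv E p r'"
          using sync[OF P _ hr r''(3) ph pa] by blast
        then have xr: "x \<in> received_items E p r'" unfolding received_items_def by force
        show ?thesis
        proof (cases "r' = r0")
          case True then show ?thesis using xr by (simp add: PV_def pview_def)
        next
          case False
          then have "r' \<le> r0 - 1" using r'(1) by simp
          then have "x \<in> view E p (r0 - 1) \<union> buf E p (r0 - 1)"
            using vb_contain[OF P honest_back[OF P ph, of "r0 - 1"], of r'] xr by auto
          then show ?thesis using \<open>t \<noteq> 0\<close> D
            by (auto simp: PV_def pview_def prev_view_def prev_buf_def r0_def)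
        qed
      qed
    qed
  qed
  have upper1: "view E i r1 \<subseteq> VP"
    using up[of r1] pvsub by (auto simp: r0_def r1_def VP_def)
  have "own D genesis FC E p r0 \<subseteq> sent E p r0" using sent_eq[OF P ph pa] by auto
  then have snt: "Propose B VP t p \<in> sent E p r0" using assms(4) op unfolding p_def r0_def by blast
  have le01: "r0 + D \<le> r1" by (simp add: r0_def r1_def)
  obtain r' where r': "r' \<le> r1" "Propose B VP t p \<in> rcv E i r'"
    using sync[OF P snt ph le01 ih1 ia1] by blast
  have "r0 \<le> r'" using prop_origin[OF P r'(2) honest_back[OF P ph1 r'(1)]] by (simp add: r0_def)
  have "VP \<subseteq> props E i r' t" using r'(2) unfolding props_def p_def by blast
  also have "\<dots> \<subseteq> view E i r'"
    using window_step[OF P act[OF \<open>r0 \<le> r'\<close> r'(1)]] win[OF \<open>r0 \<le> r'\<close> r'(1)] by simp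
  also have "\<dots> \<subseteq> view E i r1" using view_mono[OF P ih1 r'(1)] .
  finally have "view E i r1 = VP" using upper1 by blast
  then show ?thesis
    using iact sl1 fc unfolding own_def r1_def by simp
qed

end
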